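(* Let $A$ be a finite set and let $X \subset A^{\mathbb Z}$ be a W-subshift. Then the set of periodic configurations of $X$ is dense in $X$.
   Context: A subshift of $A^{\mathbb Z}$ is a closed (for the product of discrete topologies) shift-invariant subset; a configuration is periodic if its orbit under the shift $(gx)(h)=x(h-g)$ is finite. $L(X)$ is the set of finite words (including the empty word) appearing as $x(i)x(i+1)\cdots x(j)$ ($i\le j$) in some $x\in X$; $|w|$ is word length. $X$ is a W-subshift if there is an integer $n_0\ge0$ such that for all $u,v\in L(X)$ there is $c\in L(X)$ with $|c|\le n_0$ and $ucv\in L(X)$. *)

theory Defs
  imports "HOL-Analysis.Analysis"
begin

definition fullshift_top :: "'a set \<Rightarrow> (int \<Rightarrow> 'a) topology" where
  "fullshift_top A = product_topology (\<lambda>_. discrete_topology A) UNIV"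

definition shift :: "int \<Rightarrow> (int \<Rightarrow> 'a) \<Rightarrow> (int \<Rightarrow> 'a)" where
  "shift g x = (\<lambda>h. x (h - g))"

definition subshift :: "'a set \<Rightarrow> (int \<Rightarrow> 'a) set \<Rightarrow> bool" where
  "subshift A X \<longleftrightarrow> X \<subseteq> topspace (fullshift_top A) \<and>
     closedin (fullshift_top A) X \<and> (\<forall>g. \<forall>x\<in>X. shift g x \<in> X)"

definition periodic :: "(int \<Rightarrow> 'a) \<Rightarrow> bool" where
  "periodic x \<longleftrightarrow> finite (range (\<lambda>g. shift g x))"

definition language :: "(int \<Rightarrow> 'a) set \<Rightarrow> 'a list set" where
  "language X = {[]} \<union>
     {w. \<exists>x\<in>X. \<exists>i. w = map (\<lambda>k. x (i + int k)) [0..<length w]}"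

definition W_subshift :: "'a set \<Rightarrow> (int \<Rightarrow> 'a) set \<Rightarrow> bool" where
  "W_subshift A X \<longleftrightarrow> subshift A X \<and>
     (\<exists>n0::nat. \<forall>u\<in>language X. \<forall>v\<in>language X.
        \<exists>c\<in>language X. length c \<le> n0 \<and> u @ c @ v \<in> language X)"

end

theory Submission
  imports Defs
begin

lemma lang_factor:
  assumes "a @ b @ d \<in> language X"
  shows "b \<in> language X"
proof (cases "b = []")
  case True thus ?thesis by (simp add: language_def)
next
  case False
  then have ne: "a @ b @ d \<noteq> []" by simp
  with assms obtain x i where x: "x \<in> X"
    and w: "a @ b @ d = map (\<lambda>k. x (i + int k)) [0..<length (a @ b @ d)]"
    unfolding language_def by blast
  have nth: "\<And>k. k < length (a @ b @ d) \<Longrightarrow> (a @ b @ d) ! k = x (i + int k)"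
    by (subst w) simp
  have "b = map (\<lambda>k. x ((i + int (length a)) + int k)) [0..<length b]"
  proof (rule nth_equalityI)
    fix k assume "k < length b"
    then have "(a @ b @ d) ! (length a + k) = b ! k" by (simp add: nth_append)
    moreover have "(a @ b @ d) ! (length a + k) = x (i + int (length a + k))"
      using \<open>k < length b\<close> by (intro nth) simp
    ultimately show "b ! k = map (\<lambda>k. x ((i + int (length a)) + int k)) [0..<length b] ! k"
      using \<open>k < length b\<close> by (simp add: add.assoc)
  qed simp
  thus ?thesis using x unfolding language_def by blast
qed

lemma lang_set:
  assumes "w \<in> language X" and sub: "X \<subseteq> topspace (fullshift_top A)"
  shows "set w \<subseteq> A"
proof
  fix a assume a: "a \<in> set w"
  then have "w \<noteq> []" by auto
  with assms(1) obtain x i where x: "x \<in> X"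
    and w: "w = map (\<lambda>k. x (i + int k)) [0..<length w]"
    unfolding language_def by blast
  from a w obtain k where "a = x (i + int k)"
    by (metis (no_types, lifting) ex_map_conv)
  moreover have "x \<in> topspace (fullshift_top A)" using x sub by blast
  ultimately show "a \<in> A" by (auto simp: fullshift_top_def PiE_def)
qed

lemma window_in_lang:
  assumes "x \<in> X"
  shows "map (\<lambda>k. x (i + int k)) [0..<n] \<in> language X"
  using assms unfolding language_def by force

lemma lang_point:
  assumes "w \<in> language X" "w \<noteq> []" and sh: "\<forall>g. \<forall>x\<in>X. shift g x \<in> X"
  shows "\<exists>z\<in>X. \<forall>k<length w. z (i + int k) = w ! k"
proof -
  from assms obtain x j where x: "x \<in> X"
    and w: "w = map (\<lambda>k. x (j + int k)) [0..<length w]"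
    unfolding language_def by blast
  have "shift (i - j) x \<in> X" using sh x by blast
  moreover have "\<forall>k<length w. shift (i - j) x (i + int k) = w ! k"
  proof (intro allI impI)
    fix k assume "k < length w"
    then have "w ! k = x (j + int k)" by (subst w) simp
    thus "shift (i - j) x (i + int k) = w ! k" by (simp add: shift_def add.commute)
  qed
  ultimately show ?thesis by blast
qed

lemma conv_lemma:
  assumes sub: "X \<subseteq> topspace (fullshift_top A)"
    and z: "\<And>M. z M \<in> X \<and> (\<forall>h. \<bar>h\<bar> \<le> int M \<longrightarrow> z M h = y h)"
  shows "limitin (fullshift_top A) z y sequentially"
  unfolding fullshift_top_def
proof (subst limitin_componentwise, intro conjI ballI)
  show "y \<in> extensional UNIV" by simp
  show "\<forall>\<^sub>F a in sequentially. z a \<in> topspace (product_topology (\<lambda>_. discrete_topology A) UNIV)"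
    using z sub by (auto simp: fullshift_top_def intro!: always_eventually)
  fix h :: int
  have zt: "\<And>M. z M h \<in> A" using z sub by (force simp: fullshift_top_def PiE_def)
  have ev: "\<forall>\<^sub>F M in sequentially. z M h = y h"
  proof (rule eventually_sequentiallyI[of "nat \<bar>h\<bar>"])
    fix M assume "nat \<bar>h\<bar> \<le> M"
    thus "z M h = y h" using z[of M] by auto
  qed
  have "y h \<in> A" using zt[of "nat \<bar>h\<bar>"] z[of "nat \<bar>h\<bar>"] by auto
  then show "limitin (discrete_topology A) (\<lambda>c. z c h) (y h) sequentially"
    unfolding limitin_def using ev by (auto elim: eventually_mono)
qed

lemma sync:
  assumes fin: "finite A" and sub: "X \<subseteq> topspace (fullshift_top A)"
    and W: "\<forall>u\<in>language X. \<forall>v\<in>language X. \<exists>c\<in>language X. length c \<le> n0 \<and> u @ c @ v \<in> language X"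
    and u: "u \<in> language X"
  shows "\<exists>c w v. c \<in> language X \<and> w \<in> language X \<and> v \<in> language X \<and> (\<exists>v1. v = u @ v1) \<and>
     (\<forall>s t. s \<in> language X \<longrightarrow> t \<in> language X \<longrightarrow> (\<exists>s0. s = s0 @ w) \<longrightarrow> (\<exists>t0. t = v @ t0)
        \<longrightarrow> s @ c @ t \<in> language X)"
proof (rule ccontr)
  assume H: "\<not> ?thesis"
  define B where "B = {c \<in> language X. length c \<le> n0}"
  have "B \<subseteq> {xs. set xs \<subseteq> A \<and> length xs \<le> n0}"
    using lang_set[OF _ sub] by (auto simp: B_def)
  then have finB: "finite B" using finite_lists_length_le[OF fin] finite_subset by blast
  have step: "\<exists>w v. w \<in> language X \<and> v \<in> language X \<and> (\<exists>v1. v = u @ v1) \<and> (\<forall>c\<in>F. w @ c @ v \<notin> language X)"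
    if "finite F" "F \<subseteq> B" for F
    using that
  proof (induction F rule: finite_induct)
    case empty
    show ?case using u by (intro exI[of _ "[]"] exI[of _ u]) (auto simp: language_def)
  next
    case (insert c F)
    then obtain w v v1 where w: "w \<in> language X" and v: "v \<in> language X" and v1: "v = u @ v1"
      and nF: "\<forall>c\<in>F. w @ c @ v \<notin> language X" by blast
    have c: "c \<in> language X" using insert.prems by (auto simp: B_def)
    have notall: "\<not> (\<forall>s t. s \<in> language X \<longrightarrow> t \<in> language X \<longrightarrow> (\<exists>s0. s = s0 @ w) \<longrightarrow> (\<exists>t0. t = v @ t0)
        \<longrightarrow> s @ c @ t \<in> language X)"
    proof
      assume all: "\<forall>s t. s \<in> language X \<longrightarrow> t \<in> language X \<longrightarrow> (\<exists>s0. s = s0 @ w) \<longrightarrow> (\<exists>t0. t = v @ t0)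
        \<longrightarrow> s @ c @ t \<in> language X"
      have "\<exists>c w v. c \<in> language X \<and> w \<in> language X \<and> v \<in> language X \<and> (\<exists>v1. v = u @ v1) \<and>
     (\<forall>s t. s \<in> language X \<longrightarrow> t \<in> language X \<longrightarrow> (\<exists>s0. s = s0 @ w) \<longrightarrow> (\<exists>t0. t = v @ t0)
        \<longrightarrow> s @ c @ t \<in> language X)"
        apply (rule exI[of _ c], rule exI[of _ w], rule exI[of _ v])
        using c w v v1 all by blast
      with H show False by (rule notE)
    qed
    then obtain s t s0 t0 where s: "s \<in> language X" and t: "t \<in> language X"
      and s0: "s = s0 @ w" and t0: "t = v @ t0" and nst: "s @ c @ t \<notin> language X"
      by blast
    have "\<forall>c'\<in>insert c F. s @ c' @ t \<notin> language X"
    proof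
      fix c' assume "c' \<in> insert c F"
      then show "s @ c' @ t \<notin> language X"
      proof
        assume "c' = c" thus ?thesis using nst by simp
      next
        assume cF: "c' \<in> F"
        show ?thesis
        proof
          assume "s @ c' @ t \<in> language X"
          then have "s0 @ (w @ c' @ v) @ t0 \<in> language X" using s0 t0 by simp
          then have "w @ c' @ v \<in> language X" by (rule lang_factor)
          with nF cF show False by blast
        qed
      qed
    qed
    moreover have "t = u @ (v1 @ t0)" using t0 v1 by simp
    ultimately show ?case using s t by blast
  qed
  from step[OF finB order_refl] obtain w v where w: "w \<in> language X" and v: "v \<in> language X"
    and nB: "\<forall>c\<in>B. w @ c @ v \<notin> language X" by blast
  from W w v obtain c where "c \<in> language X" "length c \<le> n0" "w @ c @ v \<in> language X" by blast
  with nB show False by (auto simp: B_def)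
qed

lemma nth_concat_replicate:
  "j < K * length q \<Longrightarrow> concat (replicate K q) ! j = q ! (j mod length q)"
proof (induction K arbitrary: j)
  case 0 thus ?case by simp
next
  case (Suc K)
  show ?case
  proof (cases "j < length q")
    case True thus ?thesis by (simp add: nth_append)
  next
    case False
    then have "j - length q < K * length q" using Suc.prems by simp
    then have "concat (replicate K q) ! (j - length q) = q ! ((j - length q) mod length q)"
      by (rule Suc.IH)
    moreover have "(j - length q) mod length q = j mod length q"
      using False by (simp add: le_mod_geq)
    ultimately show ?thesis using False by (simp add: nth_append)
  qed
qed

theorem theorem5p1:
  fixes A :: "'a set" and X :: "(int \<Rightarrow> 'a) set"
  assumes "finite A" and "W_subshift A X"
  shows "X \<subseteq> (fullshift_top A) closure_of {x \<in> X. periodic x}"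
proof
  fix x assume xX: "x \<in> X"
  from assms(2) have sub: "X \<subseteq> topspace (fullshift_top A)" and cl: "closedin (fullshift_top A) X"
    and sh: "\<forall>g. \<forall>x\<in>X. shift g x \<in> X"
    unfolding W_subshift_def subshift_def by auto
  from assms(2) obtain n0 :: nat where
    W: "\<forall>u\<in>language X. \<forall>v\<in>language X. \<exists>c\<in>language X. length c \<le> n0 \<and> u @ c @ v \<in> language X"
    unfolding W_subshift_def by blast
  have key: "\<exists>y. y \<in> X \<and> periodic y \<and> (\<forall>h. \<bar>h\<bar> \<le> int N \<longrightarrow> y h = x h)" for N :: nat
  proof -
    define u where "u = map (\<lambda>k. x (- int N + int k)) [0..<2*N+1]"
    have uL: "u \<in> language X" unfolding u_def by (rule window_in_lang[OF xX])
    obtain c w v where cL: "c \<in> language X" and wL: "w \<in> language X" and vL: "v \<in> language X"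
      and vu: "\<exists>v1. v = u @ v1"
      and syn: "\<forall>s t. s \<in> language X \<longrightarrow> t \<in> language X \<longrightarrow> (\<exists>s0. s = s0 @ w) \<longrightarrow> (\<exists>t0. t = v @ t0)
        \<longrightarrow> s @ c @ t \<in> language X"
      using sync[OF assms(1) sub W uL] by blast
    from vu obtain v1 where v1: "v = u @ v1" by blast
    from W vL wL obtain e where eL: "e \<in> language X" and vew: "v @ e @ w \<in> language X" by blast
    define p where "p = v @ e @ w"
    define q where "q = p @ c"
    define m where "m = length q"
    have qu: "q = u @ (v1 @ e @ w @ c)" by (simp add: q_def p_def v1)
    have lu: "length u = 2*N+1" by (simp add: u_def)
    have lum: "length u \<le> m" by (simp add: m_def qu)
    have mpos: "m > 0" using lum lu by simp
    have concS: "concat (replicate (Suc K) q) = concat (replicate K q) @ q" for K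
    proof -
      have "replicate (Suc K) q = replicate K q @ [q]" by (simp add: replicate_append_same)
      thus ?thesis by (simp del: replicate_Suc)
    qed
    have pow: "concat (replicate K q) @ p \<in> language X" for K
    proof (induction K)
      case 0 thus ?case using vew by (simp add: p_def)
    next
      case (Suc K)
      have eq: "concat (replicate (Suc K) q) @ p = (concat (replicate K q) @ p) @ c @ p"
        by (simp only: concS) (simp add: q_def)
      have "(concat (replicate K q) @ p) @ c @ p \<in> language X"
        apply (rule syn[rule_format])
        using Suc.IH vew by (auto simp: p_def)
      thus ?case using eq by simp
    qed
    define y where "y = (\<lambda>h. q ! nat ((h + int N) mod int m))"
    have agree: "\<forall>h. \<bar>h\<bar> \<le> int N \<longrightarrow> y h = x h"
    proof (intro allI impI)
      fix h :: int assume h: "\<bar>h\<bar> \<le> int N"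
      define k where "k = nat (h + int N)"
      have k: "int k = h + int N" "k < 2*N+1" using h by (auto simp: k_def)
      have "(h + int N) mod int m = h + int N"
        using k lum lu by (intro mod_pos_pos_trivial) auto
      then have "y h = q ! k" by (simp add: y_def k_def)
      also have "\<dots> = u ! k" using k lu by (simp add: qu nth_append)
      also have "\<dots> = x (- int N + int k)" using k by (simp add: u_def del: upt_Suc)
      also have "\<dots> = x h" using k by simp
      finally show "y h = x h" .
    qed
    have shmod: "shift g y = shift (g mod int m) y" for g
    proof
      fix h
      have "(h - g mod int m + int N) mod int m = ((h + int N) - g mod int m) mod int m"
        by (simp add: algebra_simps)
      also have "\<dots> = ((h + int N) - g) mod int m" by (rule mod_diff_right_eq)
      also have "\<dots> = (h - g + int N) mod int m" by (simp add: algebra_simps)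
      finally have "(h - g + int N) mod int m = (h - g mod int m + int N) mod int m" by simp
      thus "shift g y h = shift (g mod int m) y h" by (simp add: shift_def y_def)
    qed
    have per: "periodic y"
    proof -
      have "range (\<lambda>g. shift g y) \<subseteq> (\<lambda>g. shift g y) ` {0..<int m}"
      proof
        fix f assume "f \<in> range (\<lambda>g. shift g y)"
        then obtain g where f: "f = shift g y" by blast
        have "g mod int m \<in> {0..<int m}" using mpos by simp
        thus "f \<in> (\<lambda>g. shift g y) ` {0..<int m}" using f shmod by blast
      qed
      thus ?thesis unfolding periodic_def by (rule finite_subset) simp
    qed
    have win: "\<exists>z. z \<in> X \<and> (\<forall>h. \<bar>h\<bar> \<le> int M \<longrightarrow> z h = y h)" for M :: nat
    proof -
      define \<omega> where "\<omega> = map (\<lambda>k. y (- int M + int k)) [0..<2*M+1]"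
      define K where "K = 2*M+2"
      define Q where "Q = concat (replicate K q)"
      define r where "r = nat ((- int M + int N) mod int m)"
      have rm: "r < m" using mpos unfolding r_def by (subst nat_less_iff) auto
      have lQ': "length (concat (replicate K' q)) = K' * length q" for K'
        by (induction K') auto
      have lQ: "length Q = K * m" by (simp add: Q_def m_def lQ')
      have bound: "r + (2*M+1) \<le> K * m"
      proof -
        have "K * m = m + (2*M+1) * m" by (simp add: K_def algebra_simps)
        moreover have "(2*M+1) * 1 \<le> (2*M+1) * m" using mpos by (intro mult_le_mono2) simp
        then have "(2*M+1) \<le> (2*M+1) * m" by (simp only: mult_1_right)
        ultimately show ?thesis using rm by linarith
      qed
      have om: "\<omega> = take (2*M+1) (drop r Q)"
      proof (rule nth_equalityI)
        show "length \<omega> = length (take (2*M+1) (drop r Q))"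
          using bound lQ by (simp add: \<omega>_def del: upt_Suc)
        fix k assume "k < length \<omega>"
        then have k: "k < 2*M+1" by (simp add: \<omega>_def del: upt_Suc)
        have "take (2*M+1) (drop r Q) ! k = Q ! (r + k)" using k bound lQ by simp
        also have "\<dots> = q ! ((r + k) mod m)"
          unfolding Q_def m_def using k bound by (intro nth_concat_replicate) (simp add: m_def)
        also have "(r + k) mod m = nat ((- int M + int k + int N) mod int m)"
        proof -
          have "int ((r + k) mod m) = (int r + int k) mod int m" by (simp add: of_nat_mod)
          also have "int r = (- int M + int N) mod int m" using mpos by (simp add: r_def)
          also have "((- int M + int N) mod int m + int k) mod int m = ((- int M + int N) + int k) mod int m"
            by (rule mod_add_left_eq)
          also have "\<dots> = (- int M + int k + int N) mod int m" by (simp add: algebra_simps)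
          finally show ?thesis by simp
        qed
        finally show "\<omega> ! k = take (2*M+1) (drop r Q) ! k"
          using k by (simp add: \<omega>_def y_def del: upt_Suc)
      qed
      have QL: "Q \<in> language X"
        using lang_factor[of "[]" Q p X] pow[of K] by (simp add: Q_def)
      have "Q = take r Q @ \<omega> @ drop (2*M+1) (drop r Q)"
        unfolding om by (simp only: append_take_drop_id)
      then have "take r Q @ \<omega> @ drop (2*M+1) (drop r Q) \<in> language X" using QL by simp
      then have \<omega>L: "\<omega> \<in> language X" by (rule lang_factor)
      have "\<omega> \<noteq> []" by (simp add: \<omega>_def del: upt_Suc)
      from lang_point[OF \<omega>L this sh, of "- int M"] obtain z where zX: "z \<in> X"
        and z: "\<forall>k<length \<omega>. z (- int M + int k) = \<omega> ! k" by blast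
      have "\<forall>h. \<bar>h\<bar> \<le> int M \<longrightarrow> z h = y h"
      proof (intro allI impI)
        fix h :: int assume h: "\<bar>h\<bar> \<le> int M"
        define k where "k = nat (h + int M)"
        have k: "h = - int M + int k" "k < 2*M+1" using h by (auto simp: k_def)
        then show "z h = y h" using z by (simp add: \<omega>_def del: upt_Suc)
      qed
      thus ?thesis using zX by blast
    qed
    then have "\<forall>M. \<exists>z. z \<in> X \<and> (\<forall>h. \<bar>h\<bar> \<le> int M \<longrightarrow> z h = y h)" by blast
    then have "\<exists>zz. \<forall>M. zz M \<in> X \<and> (\<forall>h. \<bar>h\<bar> \<le> int M \<longrightarrow> zz M h = y h)" by (rule choice)
    then obtain zz where zz: "\<And>M. zz M \<in> X \<and> (\<forall>h. \<bar>h\<bar> \<le> int M \<longrightarrow> zz M h = y h)"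
      by blast
    have "limitin (fullshift_top A) zz y sequentially" by (rule conv_lemma[OF sub zz])
    then have "y \<in> X"
      by (rule limitin_closedin[OF _ cl]) (use zz in auto)
    thus ?thesis using per agree by blast
  qed
  then have "\<forall>N. \<exists>y. y \<in> X \<and> periodic y \<and> (\<forall>h. \<bar>h\<bar> \<le> int N \<longrightarrow> y h = x h)" by blast
  then have "\<exists>yy. \<forall>N. yy N \<in> X \<and> periodic (yy N) \<and> (\<forall>h. \<bar>h\<bar> \<le> int N \<longrightarrow> yy N h = x h)"
    by (rule choice)
  then obtain yy where yy: "\<And>N. yy N \<in> X \<and> periodic (yy N) \<and> (\<forall>h. \<bar>h\<bar> \<le> int N \<longrightarrow> yy N h = x h)"
    by blast
  have lim: "limitin (fullshift_top A) yy x sequentially"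
    by (rule conv_lemma[OF sub]) (use yy in blast)
  show "x \<in> (fullshift_top A) closure_of {x \<in> X. periodic x}"
    unfolding in_closure_of
  proof (intro conjI allI impI)
    show "x \<in> topspace (fullshift_top A)" using xX sub by blast
    fix T assume "x \<in> T \<and> openin (fullshift_top A) T"
    then have "\<forall>\<^sub>F N in sequentially. yy N \<in> T" using lim unfolding limitin_def by blast
    then obtain N where "yy N \<in> T" by (auto simp: eventually_sequentially)
    thus "\<exists>y. y \<in> {x \<in> X. periodic x} \<and> y \<in> T" using yy by blast
  qed
qed

end
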